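(* Let $\alpha>2$, let $i\in\{1,2\}$ and let $j$ be the other index. Fix $\Lambda_j>0$. Then the function \[ \Lambda_i\mapsto U_i(\Lambda_1,\Lambda_2)=\Lambda_i\int_0^\infty e^{-(\Lambda_1+\Lambda_2)x^{2/\alpha}}\frac{dx}{1+x},\qquad \Lambda_i>0, \] is smooth and continuous and has a unique maximum point $\Lambda_i^*$. *)

theory Defs
  imports "HOL-Analysis.Analysis"
begin

definition U :: "real \<Rightarrow> nat \<Rightarrow> real \<Rightarrow> real \<Rightarrow> real" where
  "U \<alpha> i L1 L2 = (if i = 1 then L1 else L2) *
     integral {0..} (\<lambda>x::real. exp (- (L1 + L2) * x powr (2 / \<alpha>)) / (1 + x))"

definition smooth_on_real :: "real set \<Rightarrow> (real \<Rightarrow> real) \<Rightarrow> bool" where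
  "smooth_on_real S f \<longleftrightarrow>
     (\<exists>D :: nat \<Rightarrow> real \<Rightarrow> real. D 0 = f \<and>
        (\<forall>n. \<forall>x\<in>S. (D n has_real_derivative D (Suc n) x) (at x)))"

end

theory Submission
  imports Defs "HOL-Real_Asymp.Real_Asymp"
begin


definition kk :: "real \<Rightarrow> nat \<Rightarrow> real \<Rightarrow> real \<Rightarrow> real" where
  "kk b n s x = (x powr b)^n * (exp (- s * x powr b) / (1 + x))"
definition jj :: "real \<Rightarrow> real \<Rightarrow> real \<Rightarrow> real" where
  "jj b s x = exp (- s * x powr b) / (1 + x)^2"
definition II :: "real \<Rightarrow> nat \<Rightarrow> real \<Rightarrow> real" where
  "II b n s = integral {0..} (kk b n s)"
definition JJ :: "real \<Rightarrow> real \<Rightarrow> real" where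
  "JJ b s = integral {0..} (jj b s)"

lemma pow_exp_bound:
  fixes s a :: real
  assumes "0 < s" "0 \<le> a"
  shows "\<exists>C. \<forall>u\<ge>0. u powr a * exp (- s * u) \<le> C"
proof -
  define N :: nat where "N = nat \<lceil>a\<rceil> + 1"
  have aN: "a \<le> real N" and N0: "N > 0" unfolding N_def by linarith+
  have "u powr a * exp (- s * u) \<le> 1 + (real N / s) ^ N" if u: "u \<ge> 0" for u
  proof -
    have pa: "u powr a \<le> 1 + u ^ N"
    proof (cases "u \<le> 1")
      case True
      then have "u powr a \<le> 1" using u assms
        by (intro powr_le1) auto
      then show ?thesis by (simp add: add_increasing2 u)
    next
      case False
      then have "u powr a \<le> u powr real N" using aN by (intro powr_mono) auto
      also have "\<dots> = u ^ N" using False by (simp add: powr_realpow)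
      finally show ?thesis by simp
    qed
    have "(s * u / real N) ^ N \<le> (1 + s * u / real N) ^ N"
      using u assms N0 by (intro power_mono) auto
    also have "\<dots> \<le> exp (s * u)" using u assms N0 by (intro exp_ge_one_plus_x_over_n_power_n)
      (auto intro: order_trans[of _ 0] simp: mult_nonneg_nonneg)
    finally have e1: "(s * u / real N) ^ N \<le> exp (s * u)" .
    have "u ^ N * exp (- s * u) \<le> (real N / s) ^ N"
    proof -
      have "(s / real N) ^ N * (u ^ N * exp (- s * u)) = (s * u / real N) ^ N * exp (- s * u)"
        by (simp add: power_mult_distrib field_simps)
      also have "\<dots> \<le> exp (s * u) * exp (- s * u)" using e1 by (intro mult_right_mono) auto
      also have "\<dots> = 1" by (simp add: exp_minus field_simps)
      finally have "(s / real N) ^ N * (u ^ N * exp (- s * u)) \<le> 1" .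
      moreover have "(s / real N) ^ N > 0" using assms N0 by simp
      ultimately have "u ^ N * exp (- s * u) \<le> 1 / (s / real N) ^ N"
        by (subst pos_le_divide_eq) (auto simp: mult.commute simp del: divide_le_eq_1)
      also have "\<dots> = (real N / s) ^ N" by (simp add: power_divide)
      finally show ?thesis .
    qed
    moreover have "exp (- s * u) \<le> 1" using assms u by simp
    ultimately have "(1 + u ^ N) * exp (- s * u) \<le> 1 + (real N / s) ^ N"
      unfolding distrib_right mult_1_left by (rule add_mono[rotated])
    moreover have "u powr a * exp (- s * u) \<le> (1 + u ^ N) * exp (- s * u)"
      using pa by (intro mult_right_mono) auto
    ultimately show ?thesis by linarith
  qed
  then show ?thesis by blast
qed

lemma kk_bound:
  assumes "0 < b" "0 < s"
  shows "\<exists>C. \<forall>x\<ge>0. kk b n s x \<le> C / (1 + x)^2"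
proof -
  obtain C1 where C1: "\<forall>u\<ge>0. u powr (real n) * exp (- s * u) \<le> C1"
    using pow_exp_bound[OF assms(2), of "real n"] by auto
  obtain C2 where C2: "\<forall>u\<ge>0. u powr (real n + 1 / b) * exp (- s * u) \<le> C2"
    using pow_exp_bound[OF assms(2), of "real n + 1/b"] assms by auto
  have "kk b n s x \<le> (C1 + 1 + C2) / (1 + x)^2" if x: "x \<ge> 0" for x
  proof -
    define u where "u = x powr b"
    have u0: "u \<ge> 0" unfolding u_def by simp
    have xu: "x = u powr (1 / b)" unfolding u_def using x assms
      by (simp add: powr_powr)
    have pn: "u ^ n \<le> u powr real n + 1"
      using u0 by (cases "u = 0") (auto simp: powr_realpow power_0_left)
    have pn2: "u ^ n * u powr (1/b) = u powr (real n + 1/b)"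
      using u0 assms by (cases "u = 0") (auto simp: powr_realpow powr_add)
    have "kk b n s x * (1 + x)^2 = u ^ n * exp (- s * u) * (1 + x)"
      unfolding kk_def u_def using x by (simp add: power2_eq_square field_simps)
    also have "\<dots> = u ^ n * exp (- s * u) + u powr (real n + 1/b) * exp (- s * u)"
      by (simp add: pn2[symmetric] xu distrib_left distrib_right)
    also have "\<dots> \<le> (u powr real n + 1) * exp (- s * u) + u powr (real n + 1/b) * exp (- s * u)"
      using pn by (intro add_mono mult_right_mono) auto
    also have "\<dots> \<le> (C1 + 1) + C2"
    proof (intro add_mono)
      have "exp (- s * u) \<le> 1" using u0 assms by simp
      then show "(u powr real n + 1) * exp (- s * u) \<le> C1 + 1"
        using C1 u0 by (simp add: distrib_right add_mono)
    qed (use C2 u0 in auto)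
    finally have "kk b n s x * (1 + x)^2 \<le> C1 + 1 + C2" .
    moreover have "(1 + x)^2 > 0" using x by simp
    ultimately show ?thesis by (simp add: field_simps)
  qed
  then show ?thesis by blast
qed

lemma inv_sq_int: "((\<lambda>x::real. 1 / (1 + x)^2) has_integral 1) {0..}"
proof (rule has_integral_to_inf)
  show "(\<lambda>x::real. 1 / (1 + x)^2) integrable_on {0..y}" for y
    by (intro integrable_continuous_interval continuous_intros) auto
  have "((\<lambda>x::real. 1 / (1 + x)^2) has_integral ((-1/(1+y)) - (-1/(1+0)))) {0..y}" if "y \<ge> 0" for y :: real
    using that
    by (intro fundamental_theorem_of_calculus)
       (auto intro!: derivative_eq_intros simp flip: has_real_derivative_iff_has_vector_derivative
             simp: power2_eq_square field_simps)
  then have "\<forall>\<^sub>F y in at_top. integral {0..y} (\<lambda>x::real. 1 / (1 + x)^2) = 1 - 1/(1+y)"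
    by (intro eventually_at_top_linorderI[of 0]) (auto dest: integral_unique)
  moreover have "((\<lambda>y::real. 1 - 1/(1+y)) \<longlongrightarrow> 1) at_top" by real_asymp
  ultimately show "((\<lambda>y. integral {0..y} (\<lambda>x::real. 1 / (1 + x)^2)) \<longlongrightarrow> 1) at_top"
    by (simp add: filterlim_cong)
qed auto

lemma powr_cont: "0 < b \<Longrightarrow> continuous_on {0..} (\<lambda>x::real. x powr b)"
  by (intro continuous_on_powr') (auto intro: continuous_intros)

lemma kk_cont: "0 < b \<Longrightarrow> continuous_on {0..} (kk b n s)"
  unfolding kk_def
  by (intro continuous_intros powr_cont) auto

lemma jj_cont: "0 < b \<Longrightarrow> continuous_on {0..} (jj b s)"
  unfolding jj_def
  by (intro continuous_intros powr_cont) auto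

lemma kk_nonneg: "x \<ge> 0 \<Longrightarrow> kk b n s x \<ge> 0"
  unfolding kk_def by simp

lemma jj_nonneg: "x \<ge> 0 \<Longrightarrow> jj b s x \<ge> 0"
  unfolding jj_def by simp

lemma bounded_int:
  fixes f :: "real \<Rightarrow> real"
  assumes "continuous_on {0..} f" "\<And>x. x \<ge> 0 \<Longrightarrow> 0 \<le> f x"
    "\<And>x. x \<ge> 0 \<Longrightarrow> f x \<le> C / (1 + x)^2"
  shows "f integrable_on {0..}"
proof -
  have "(\<lambda>x::real. C * (1 / (1 + x)^2)) integrable_on {0..}"
    using integrable_cmul[OF has_integral_integrable[OF inv_sq_int], of C] by simp
  then have "f absolutely_integrable_on {0..}"
    using assms
    by (intro measurable_bounded_by_integrable_imp_absolutely_integrable[where g = "\<lambda>x. C * (1 / (1 + x)^2)"]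
          continuous_imp_measurable_on_sets_lebesgue) auto
  then show ?thesis using set_lebesgue_integral_eq_integral(1) by blast
qed

lemma kk_int: "0 < b \<Longrightarrow> 0 < s \<Longrightarrow> kk b n s integrable_on {0..}"
  using kk_bound[of b s n] by (metis bounded_int kk_cont kk_nonneg)

lemma jj_le_kk: "x \<ge> 0 \<Longrightarrow> jj b s x \<le> kk b 0 s x"
proof -
  assume x: "x \<ge> 0"
  have "1 / (1 + x)^2 \<le> 1 / (1 + x)" using x
    by (intro divide_left_mono) (auto simp: power2_eq_square)
  from mult_left_mono[OF this, of "exp (- s * x powr b)"] show ?thesis
    unfolding jj_def kk_def by simp
qed

lemma jj_int: "0 < b \<Longrightarrow> 0 < s \<Longrightarrow> jj b s integrable_on {0..}"
proof -
  assume b: "0 < b" and s: "0 < s"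
  obtain C where "\<forall>x\<ge>0. kk b 0 s x \<le> C / (1 + x)^2" using kk_bound[OF b s] by blast
  then show ?thesis using jj_le_kk jj_nonneg jj_cont[OF b]
    by (intro bounded_int[where C = C]) (auto intro: order_trans[OF jj_le_kk])
qed

lemma exp_taylor2: "\<bar>exp z - 1 - z\<bar> \<le> z^2 / 2 * exp \<bar>z\<bar>" for z :: real
proof -
  obtain t where t: "\<bar>t\<bar> \<le> \<bar>z\<bar>" "exp z = (\<Sum>m<2. (z ^ m) / fact m) + (exp t / fact 2) * z ^ 2"
    using Maclaurin_exp_le[of z 2] by blast
  then have e: "exp z - 1 - z = exp t / 2 * z^2" by (simp add: numeral_2_eq_2)
  have "exp t \<le> exp \<bar>z\<bar>" using t(1) by simp
  have a: "\<bar>exp z - 1 - z\<bar> = exp t / 2 * z^2" unfolding e by simp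
  moreover have "exp t / 2 * z^2 \<le> z^2 / 2 * exp \<bar>z\<bar>"
    using \<open>exp t \<le> exp \<bar>z\<bar>\<close> by (simp add: mult_right_mono mult.commute)
  ultimately show ?thesis by linarith
qed

lemma kk_taylor:
  assumes x: "x \<ge> 0" and s: "0 < s" and h: "\<bar>h\<bar> \<le> s / 2"
  shows "\<bar>kk b n (s + h) x - kk b n s x + h * kk b (Suc n) s x\<bar> \<le> h^2 / 2 * kk b (Suc (Suc n)) (s / 2) x"
proof -
  define u where "u = x powr b"
  define w where "w = 1 / (1 + x)"
  have u0: "u \<ge> 0" and w0: "w \<ge> 0" using x by (auto simp: u_def w_def)
  have eq: "kk b n (s + h) x - kk b n s x + h * kk b (Suc n) s x
      = u^n * w * exp (- s * u) * (exp (- h * u) - 1 - (- h * u))"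
  proof -
    have e: "exp (- (s + h) * u) = exp (- s * u) * exp (- h * u)"
      by (simp add: exp_add[symmetric] algebra_simps)
    show ?thesis
      unfolding kk_def u_def[symmetric] w_def e
      by (simp add: algebra_simps diff_divide_distrib add_divide_distrib)
  qed
  have "\<bar>exp (- h * u) - 1 - (- h * u)\<bar> \<le> (- h * u)^2 / 2 * exp \<bar>- h * u\<bar>"
    by (rule exp_taylor2)
  also have "\<dots> = h^2 * u^2 / 2 * exp (\<bar>h\<bar> * u)" using u0
    by (simp add: power_mult_distrib abs_mult)
  finally have t: "\<bar>exp (- h * u) - 1 - (- h * u)\<bar> \<le> h^2 * u^2 / 2 * exp (\<bar>h\<bar> * u)" .
  have "\<bar>kk b n (s + h) x - kk b n s x + h * kk b (Suc n) s x\<bar>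
      = u^n * w * exp (- s * u) * \<bar>exp (- h * u) - 1 - (- h * u)\<bar>"
    unfolding eq using u0 w0 by (simp add: abs_mult)
  also have "\<dots> \<le> u^n * w * exp (- s * u) * (h^2 * u^2 / 2 * exp (\<bar>h\<bar> * u))"
    using t u0 w0 by (intro mult_left_mono) auto
  also have "\<dots> = h^2 / 2 * (u^(Suc (Suc n)) * w * exp (- s * u + \<bar>h\<bar> * u))"
    using exp_add[of "- s * u" "\<bar>h\<bar> * u"] by (simp add: power2_eq_square mult_ac)
  also have "\<dots> \<le> h^2 / 2 * (u^(Suc (Suc n)) * w * exp (- (s / 2) * u))"
  proof -
    have "- s * u + \<bar>h\<bar> * u \<le> - (s / 2) * u" using h u0
    proof -
      have "\<bar>h\<bar> * u \<le> (s / 2) * u" using h u0 by (rule mult_right_mono)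
      then show ?thesis by (simp add: algebra_simps)
    qed
    then show ?thesis using u0 w0
      by (intro mult_left_mono) auto
  qed
  also have "\<dots> = h^2 / 2 * kk b (Suc (Suc n)) (s / 2) x"
    unfolding kk_def u_def[symmetric] w_def by simp
  finally show ?thesis .
qed

lemma II_deriv:
  assumes b: "0 < b" and s: "0 < s"
  shows "(II b n has_real_derivative - II b (Suc n) s) (at s)"
  unfolding DERIV_def
proof -
  define M where "M = II b (Suc (Suc n)) (s / 2)"
  have bound: "\<bar>(II b n (s + h) - II b n s) / h - - II b (Suc n) s\<bar> \<le> \<bar>h\<bar> / 2 * M"
    if h0: "h \<noteq> 0" and hs: "\<bar>h\<bar> < s / 2" for h
  proof -
    have sh: "0 < s + h" using hs by linarith
    define F where "F = (\<lambda>x. kk b n (s + h) x - kk b n s x + h * kk b (Suc n) s x)"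
    have i1: "kk b n (s + h) integrable_on {0..}" using kk_int b sh by blast
    have i2: "kk b n s integrable_on {0..}" using kk_int b s by blast
    have i3: "kk b (Suc n) s integrable_on {0..}" using kk_int b s by blast
    have i4: "kk b (Suc (Suc n)) (s/2) integrable_on {0..}" using kk_int b s by simp
    have intF: "integral {0..} F = II b n (s + h) - II b n s + h * II b (Suc n) s"
    proof -
      have d: "(\<lambda>x. kk b n (s + h) x - kk b n s x) integrable_on {0..}"
        using i1 i2 by (rule integrable_diff)
      have m: "(\<lambda>x. h * kk b (Suc n) s x) integrable_on {0..}"
        using integrable_on_cmult_left[OF i3, of h] by simp
      show ?thesis unfolding F_def II_def
        by (subst integral_add[OF d m], subst integral_diff[OF i1 i2], subst integral_mult_right) simp
    qed
    have "norm (integral {0..} F) \<le> integral {0..} (\<lambda>x. h^2 / 2 * kk b (Suc (Suc n)) (s / 2) x)"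
    proof (rule integral_norm_bound_integral)
      show "F integrable_on {0..}" unfolding F_def
        using i1 i2 integrable_on_cmult_left[OF i3, of h] by (intro integrable_add integrable_diff) auto
      show "(\<lambda>x. h^2 / 2 * kk b (Suc (Suc n)) (s / 2) x) integrable_on {0..}"
        using integrable_on_cmult_left[OF i4, of "h^2/2"] by simp
      show "norm (F x) \<le> h^2 / 2 * kk b (Suc (Suc n)) (s / 2) x" if "x \<in> {0..}" for x
        using kk_taylor[of x s h b n] that s hs unfolding F_def by auto
    qed
    also have "\<dots> = h^2 / 2 * M" unfolding M_def II_def by simp
    finally have nF: "\<bar>integral {0..} F\<bar> \<le> h^2 / 2 * M" by simp
    have "(II b n (s + h) - II b n s) / h - - II b (Suc n) s = integral {0..} F / h"
      using h0 by (simp add: intF field_simps)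
    also have "\<bar>\<dots>\<bar> = \<bar>integral {0..} F\<bar> / \<bar>h\<bar>" by simp
    also have "\<dots> \<le> (h^2 / 2 * M) / \<bar>h\<bar>" using nF h0 by (intro divide_right_mono) auto
    also have "\<dots> = \<bar>h\<bar> / 2 * M" using h0 by (simp add: power2_eq_square field_simps)
    finally show ?thesis .
  qed
  have ev: "\<forall>\<^sub>F h in at 0. norm ((II b n (s + h) - II b n s) / h - - II b (Suc n) s) \<le> \<bar>h\<bar> / 2 * M"
    unfolding eventually_at using s bound
    by (intro exI[of _ "s / 2"]) (auto simp del: minus_minus)
  have lim: "((\<lambda>h. \<bar>h\<bar> / 2 * M) \<longlongrightarrow> 0) (at (0::real))"
    by (rule tendsto_eq_intros refl | simp)+
  have "((\<lambda>h. (II b n (s + h) - II b n s) / h - - II b (Suc n) s) \<longlongrightarrow> 0) (at 0)"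
    by (rule Lim_null_comparison[OF ev lim])
  then show "((\<lambda>h. (II b n (s + h) - II b n s) / h) \<longlongrightarrow> - II b (Suc n) s) (at 0)"
    using LIM_zero_iff[where f = "\<lambda>h. (II b n (s + h) - II b n s) / h" and l = "- II b (Suc n) s"]
    by simp
qed

lemma FF_deriv:
  assumes b: "0 < b" and x: "0 < x"
  shows "((\<lambda>x. x / (1 + x) * exp (- s * x powr b)) has_real_derivative
            (jj b s x - s * b * kk b 1 s x)) (at x)"
proof -
  define E where "E = exp (- s * x powr b)"
  have d1: "((\<lambda>x. x / (1 + x)) has_real_derivative 1 / (1 + x)^2) (at x)"
    using x by (auto intro!: derivative_eq_intros simp: power2_eq_square field_simps)
  have d2: "((\<lambda>x. exp (- s * x powr b)) has_real_derivative E * (- s * (b * x powr (b - 1)))) (at x)"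
    unfolding E_def using x by (auto intro!: derivative_eq_intros)
  have "x * x powr (b - 1) = x powr b" using x by (simp add: powr_diff field_simps)
  then have eq: "1 / (1 + x)^2 * E + E * (- s * (b * x powr (b - 1))) * (x / (1 + x))
      = jj b s x - s * b * kk b 1 s x"
    unfolding jj_def kk_def E_def[symmetric] using x
    by (simp add: divide_simps) (simp add: algebra_simps)
  show ?thesis
    using DERIV_mult[OF d1 d2] eq unfolding E_def by simp
qed

lemma IBP:
  assumes b: "0 < b" and s: "0 < s"
  shows "s * b * II b 1 s = JJ b s"
proof -
  define F where "F = (\<lambda>x::real. x / (1 + x) * exp (- s * x powr b))"
  define g where "g = (\<lambda>x. jj b s x - s * b * kk b 1 s x)"
  define h where "h = (\<lambda>x. jj b s x + s * b * kk b 1 s x)"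
  have ij: "jj b s integrable_on {0..}" using jj_int b s by blast
  have ik: "(\<lambda>x. s * b * kk b 1 s x) integrable_on {0..}"
    using integrable_on_cmult_left[OF kk_int[OF b s, of 1], of "s * b"] by simp
  have ig: "g integrable_on {0..}" unfolding g_def using ij ik by (rule integrable_diff)
  have ih: "h integrable_on {0..}" unfolding h_def using ij ik by (rule integrable_add)
  have ftc: "(g has_integral F y) {0..y}" if y: "y \<ge> 0" for y
  proof -
    have "(g has_integral F y - F 0) {0..y}"
    proof (rule fundamental_theorem_of_calculus_interior[OF y])
      show "continuous_on {0..y} F" unfolding F_def
        by (rule continuous_on_subset[of "{0..}"]) (auto intro!: continuous_intros powr_cont b)
      show "(F has_vector_derivative g x) (at x)" if "x \<in> {0<..<y}" for x
        using FF_deriv[OF b, of x s] that unfolding F_def g_def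
        by (simp add: has_real_derivative_iff_has_vector_derivative)
    qed
    then show ?thesis by (simp add: F_def)
  qed
  define f where "f = (\<lambda>k::nat. \<lambda>x. if x \<in> {0..real k} then g x else 0)"
  have fk: "integral {0..} (f k) = F (real k)" for k
  proof -
    have "integral {0..} (f k) = integral ({0..real k} \<inter> {0..}) g"
      unfolding f_def by (rule integral_restrict_Int)
    also have "{0..real k} \<inter> {0..} = {0..real k}" by auto
    finally show ?thesis using ftc[of "real k"] by (simp add: integral_unique)
  qed
  have dc: "(\<lambda>k. integral {0..} (f k)) \<longlonglongrightarrow> integral {0..} g"
  proof (rule dominated_convergence(2)[OF _ ih])
    show "f k integrable_on {0..}" for k
      unfolding f_def integrable_restrict_Int using ftc[of "real k"]
      by (auto simp: has_integral_integrable Int_absorb2)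
    show "norm (f k x) \<le> h x" if "x \<in> {0..}" for k x
    proof -
      have "0 \<le> s * b * kk b 1 s x" using that kk_nonneg[of x b 1 s] s b by simp
      then show ?thesis
        using that jj_nonneg[of x b s] unfolding f_def g_def h_def by (auto simp del: One_nat_def)
    qed
    show "(\<lambda>k. f k x) \<longlonglongrightarrow> g x" if "x \<in> {0..}" for x
    proof (rule tendsto_eventually)
      show "\<forall>\<^sub>F k in sequentially. f k x = g x"
        using that by (intro eventually_sequentiallyI[of "nat \<lceil>x\<rceil>"])
           (auto simp: f_def intro: order_trans[OF real_nat_ceiling_ge])
    qed
  qed
  have "(\<lambda>k. F (real k)) \<longlonglongrightarrow> 0"
    unfolding F_def using s b by real_asymp
  then have "integral {0..} g = 0" using dc fk LIMSEQ_unique by auto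
  moreover have "integral {0..} g = JJ b s - s * b * II b 1 s"
    unfolding g_def JJ_def II_def using ij ik
    by (simp add: integral_diff integral_mult_right)
  ultimately show ?thesis by simp
qed

lemma JJ_pos:
  assumes b: "0 < b" and s: "0 < s"
  shows "JJ b s > 0"
proof -
  have c1: "continuous_on {0..1} (jj b s)"
    using jj_cont[OF b] by (rule continuous_on_subset) auto
  have "integral {0..1::real} (\<lambda>x. exp (- s) / 4) \<le> integral {0..1} (jj b s)"
  proof (rule integral_le)
    show "(\<lambda>x. exp (- s) / 4) integrable_on {0..1::real}"
      by (rule integrable_continuous_interval) (rule continuous_on_const)
    show "jj b s integrable_on {0..1}" using c1 by (rule integrable_continuous_interval)
    show "exp (- s) / 4 \<le> jj b s x" if x: "x \<in> {0..1}" for x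
    proof -
      have "x powr b \<le> 1" using x b by (intro powr_le1) auto
      then have "exp (- s) \<le> exp (- s * x powr b)" using s by (simp add: mult_left_le)
      moreover have "(1 + x)^2 \<le> 2^2" using x by (intro power_mono) auto
      moreover have "(1 + x)^2 > 0" using x by simp
      ultimately show ?thesis unfolding jj_def
        by (intro frac_le) auto
    qed
  qed
  also have "\<dots> \<le> JJ b s" unfolding JJ_def
    using jj_int[OF b s] c1 jj_nonneg
    by (intro integral_subset_le) (auto intro: integrable_continuous_interval)
  finally show ?thesis by (simp add: add_pos_nonneg) (smt (verit) exp_gt_zero)
qed

lemma II0_ge_JJ:
  assumes b: "0 < b" and s: "0 < s"
  shows "JJ b s \<le> II b 0 s"
  unfolding JJ_def II_def using jj_int[OF b s] kk_int[OF b s] jj_le_kk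
  by (intro integral_le) auto

lemma II_mono:
  assumes b: "0 < b" and s: "0 < s" "s \<le> s'"
  shows "II b n s' \<le> II b n s"
  unfolding II_def using kk_int[OF b] s
proof (intro integral_le)
  show "kk b n s' x \<le> kk b n s x" if "x \<in> {0..}" for x
  proof -
    have "exp (- s' * x powr b) \<le> exp (- s * x powr b)"
      using s by (simp add: mult_right_mono)
    then show ?thesis using that unfolding kk_def
      by (intro mult_left_mono divide_right_mono) auto
  qed
qed auto



lemma aux1: "(P::real) \<noteq> 0 \<Longrightarrow> E*e/P - k2*(E*e/P^2) = e*(E/P^2*(P - k1)) - (k2 - k1)*(E*e/P^2)"
  by (simp add: field_simps power2_eq_square)

lemma aux2: "(P::real) \<noteq> 0 \<Longrightarrow> E/P - k*(E/P^2) = E/P^2*(P - k)"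
  by (simp add: field_simps power2_eq_square)

lemma Dp_form:
  assumes b: "0 < b" and s: "0 < s"
  shows "II b 0 s - L * II b 1 s = integral {0..} (\<lambda>x. kk b 0 s x - (L / (b * s)) * jj b s x)"
proof -
  have "II b 1 s = JJ b s / (s * b)" using IBP[OF b s] b s by (simp add: field_simps)
  moreover have "integral {0..} (\<lambda>x. kk b 0 s x - (L / (b * s)) * jj b s x)
      = II b 0 s - (L / (b * s)) * JJ b s"
    unfolding II_def JJ_def
    using kk_int[OF b s, of 0] integrable_on_cmult_left[OF jj_int[OF b s], of "L / (b * s)"]
    by (simp add: integral_diff integral_mult_right)
  ultimately show ?thesis by (simp add: field_simps)
qed

lemma Dp_mono:
  assumes b: "0 < b" and c: "0 < c" and L1: "0 < L1" and L12: "L1 < L2"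
    and neg: "II b 0 (L1 + c) - L1 * II b 1 (L1 + c) \<le> 0"
  shows "II b 0 (L2 + c) - L2 * II b 1 (L2 + c) < 0"
proof -
  define s1 where "s1 = L1 + c"
  define s2 where "s2 = L2 + c"
  define k1 where "k1 = L1 / (b * s1)"
  define k2 where "k2 = L2 / (b * s2)"
  define d where "d = L2 - L1"
  define x0 where "x0 = max 0 (k1 - 1)"
  define e0 where "e0 = exp (- d * x0 powr b)"
  have s1p: "0 < s1" and s2p: "0 < s2" using c L1 L12 by (auto simp: s1_def s2_def)
  have k12: "k1 < k2"
  proof -
    have "L1 / s1 < L2 / s2" unfolding s1_def s2_def using c L1 L12
      by (simp add: field_simps)
    then have "(L1 / s1) / b < (L2 / s2) / b" using b by (rule divide_strict_right_mono)
    then show ?thesis unfolding k1_def k2_def by (simp add: mult.commute)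
  qed
  have s2e: "s2 = s1 + d" unfolding s1_def s2_def d_def by simp
  have pt: "kk b 0 s2 x - k2 * jj b s2 x \<le> e0 * (kk b 0 s1 x - k1 * jj b s1 x) - (k2 - k1) * jj b s2 x"
    if x: "x \<in> {0..}" for x
  proof -
    define u where "u = x powr b"
    define E1 where "E1 = exp (- s1 * u)"
    define e where "e = exp (- d * u)"
    define A where "A = E1 / (1 + x)^2 * (1 + x - k1)"
    have x0': "0 \<le> x" using x by simp
    have E2: "exp (- s2 * u) = E1 * e" unfolding E1_def e_def s2e by (simp add: exp_add[symmetric] algebra_simps)
    have eA: "e * A \<le> e0 * A"
    proof (cases "x \<ge> x0")
      case True
      then have "A \<ge> 0" unfolding A_def x0_def E1_def using x0' by auto
      moreover have "u \<ge> x0 powr b" unfolding u_def using True x0_def b by (intro powr_mono2) auto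
      then have "e \<le> e0" unfolding e_def e0_def using L12 d_def by (simp add: mult_left_mono)
      ultimately show ?thesis by (simp add: mult_right_mono)
    next
      case False
      then have "x < k1 - 1" unfolding x0_def using x0' by auto
      then have "A \<le> 0" unfolding A_def E1_def using x0'
        by (intro mult_nonneg_nonpos) auto
      moreover have "u \<le> x0 powr b" unfolding u_def using False x0' b by (intro powr_mono2) auto
      then have "e0 \<le> e" unfolding e_def e0_def using L12 d_def by (simp add: mult_left_mono)
      ultimately show ?thesis by (simp add: mult_right_mono_neg)
    qed
    have nz: "1 + x \<noteq> 0" using x0' by simp
    have lhs: "kk b 0 s2 x - k2 * jj b s2 x = e * A - (k2 - k1) * jj b s2 x"
      unfolding kk_def jj_def u_def[symmetric] E2 A_def
      by (simp only: power_0 mult_1_left aux1[OF nz])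
    have rhs: "kk b 0 s1 x - k1 * jj b s1 x = A"
      unfolding kk_def jj_def u_def[symmetric] E1_def[symmetric] A_def
      by (simp only: power_0 mult_1_left aux2[OF nz])
    show ?thesis unfolding lhs rhs using eA by simp
  qed
  have i1: "(\<lambda>x. kk b 0 s1 x - k1 * jj b s1 x) integrable_on {0..}"
    using kk_int[OF b s1p, of 0] integrable_on_cmult_left[OF jj_int[OF b s1p], of k1]
    by (intro integrable_diff) auto
  have i2: "(\<lambda>x. kk b 0 s2 x - k2 * jj b s2 x) integrable_on {0..}"
    using kk_int[OF b s2p, of 0] integrable_on_cmult_left[OF jj_int[OF b s2p], of k2]
    by (intro integrable_diff) auto
  have i3: "(\<lambda>x. e0 * (kk b 0 s1 x - k1 * jj b s1 x) - (k2 - k1) * jj b s2 x) integrable_on {0..}"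
    using integrable_on_cmult_left[OF i1, of e0] integrable_on_cmult_left[OF jj_int[OF b s2p], of "k2 - k1"]
    by (intro integrable_diff) auto
  have "II b 0 s2 - L2 * II b 1 s2 = integral {0..} (\<lambda>x. kk b 0 s2 x - k2 * jj b s2 x)"
    unfolding k2_def using Dp_form[OF b s2p] .
  also have "\<dots> \<le> integral {0..} (\<lambda>x. e0 * (kk b 0 s1 x - k1 * jj b s1 x) - (k2 - k1) * jj b s2 x)"
    using i2 i3 pt by (intro integral_le) auto
  also have "\<dots> = e0 * integral {0..} (\<lambda>x. kk b 0 s1 x - k1 * jj b s1 x) - (k2 - k1) * JJ b s2"
    unfolding JJ_def
    using integrable_on_cmult_left[OF i1, of e0] integrable_on_cmult_left[OF jj_int[OF b s2p], of "k2 - k1"]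
    by (simp add: integral_diff integral_mult_right)
  also have "integral {0..} (\<lambda>x. kk b 0 s1 x - k1 * jj b s1 x) = II b 0 s1 - L1 * II b 1 s1"
    unfolding k1_def using Dp_form[OF b s1p] by simp
  also have "e0 * (II b 0 s1 - L1 * II b 1 s1) - (k2 - k1) * JJ b s2 < 0"
  proof -
    have "e0 * (II b 0 s1 - L1 * II b 1 s1) \<le> 0"
      using neg unfolding s1_def e0_def by (simp add: mult_nonneg_nonpos)
    moreover have "(k2 - k1) * JJ b s2 > 0" using k12 JJ_pos[OF b s2p] by simp
    ultimately show ?thesis by linarith
  qed
  finally show ?thesis unfolding s2_def .
qed

lemma II0_bound:
  assumes b: "0 < b" "b < 1" and L: "1 \<le> L"
  defines "r \<equiv> (b + 1) / 2"
  shows "L * II b 0 L \<le> L powr (1 - r / b) + L * exp (- (L - 1) * L powr (- r)) * II b 0 1"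
proof -
  define q where "q = r / b"
  define eps where "eps = L powr (- q)"
  define K where "K = exp (- (L - 1) * L powr (- r))"
  have Lp: "0 < L" using L by simp
  have epsb: "eps powr b = L powr (- r)"
    unfolding eps_def q_def using b Lp by (simp add: powr_powr)
  have eps0: "0 < eps" unfolding eps_def using Lp by simp
  have ind: "(\<lambda>x::real. if x \<in> {0..eps} then 1 else (0::real)) integrable_on {0..}"
    using integrable_restrict_Int[of "{0..eps}" "\<lambda>_. (1::real)" "{0..}"] eps0
    by (simp add: Int_absorb2 integrable_continuous_interval del: atLeastAtMost_iff)
  have indI: "integral {0..} (\<lambda>x::real. if x \<in> {0..eps} then 1 else (0::real)) = eps"
    by (subst integral_restrict_Int) (use eps0 in \<open>auto simp: Int_absorb2\<close>)
  have i1: "(\<lambda>x. K * kk b 0 1 x) integrable_on {0..}"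
    using integrable_on_cmult_left[OF kk_int[OF b(1), of 1 0], of K] by simp
  have "II b 0 L \<le> integral {0..} (\<lambda>x. (if x \<in> {0..eps} then 1 else 0) + K * kk b 0 1 x)"
    unfolding II_def
  proof (rule integral_le)
    show "kk b 0 L integrable_on {0..}" using kk_int[OF b(1)] Lp by blast
    show "(\<lambda>x. (if x \<in> {0..eps} then 1 else 0) + K * kk b 0 1 x) integrable_on {0..}"
      using ind i1 by (rule integrable_add)
    show "kk b 0 L x \<le> (if x \<in> {0..eps} then 1 else 0) + K * kk b 0 1 x" if x: "x \<in> {0..}" for x
    proof (cases "x \<le> eps")
      case True
      have "kk b 0 L x \<le> 1" unfolding kk_def using x Lp
        by (simp add: divide_le_eq_1 mult_nonneg_nonneg) (smt (verit) exp_le_one_iff exp_ge_zero mult_nonneg_nonneg powr_ge_zero)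
      moreover have "0 \<le> K * kk b 0 1 x" unfolding K_def using kk_nonneg[of x b 0 1] x by simp
      ultimately show ?thesis using True x by simp
    next
      case False
      have u: "x powr b \<ge> L powr (- r)" unfolding epsb[symmetric] using False eps0 b
        by (intro powr_mono2) auto
      have "exp (- L * x powr b) = exp (- (L - 1) * x powr b) * exp (- 1 * x powr b)"
        by (simp add: exp_add[symmetric] algebra_simps)
      also have "\<dots> \<le> K * exp (- 1 * x powr b)"
        unfolding K_def using u L by (intro mult_right_mono) (auto simp: mult_left_mono_neg)
      finally have "exp (- L * x powr b) \<le> K * exp (- 1 * x powr b)" .
      then have "kk b 0 L x \<le> K * kk b 0 1 x" unfolding kk_def using x
        by (simp add: divide_right_mono)
      then show ?thesis using False by simp
    qed
  qed
  also have "\<dots> = eps + K * II b 0 1"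
    unfolding II_def using ind i1 indI
    by (simp add: integral_add integral_mult_right kk_int b)
  finally have "L * II b 0 L \<le> L * (eps + K * II b 0 1)" using Lp by simp
  also have "L * eps = L powr (1 - q)" unfolding eps_def using Lp by (simp add: powr_diff powr_minus field_simps)
  then have "L * (eps + K * II b 0 1) = L powr (1 - r / b) + L * K * II b 0 1"
    unfolding q_def by (simp add: distrib_left)
  finally show ?thesis unfolding K_def .
qed



definition DD :: "real \<Rightarrow> real \<Rightarrow> nat \<Rightarrow> real \<Rightarrow> real" where
  "DD b c m L = (-1)^m * (L * II b m (L + c) - real m * II b (m - 1) (L + c))"

lemma DD_deriv:
  assumes b: "0 < b" and Lc: "0 < L + c"
  shows "(DD b c m has_real_derivative DD b c (Suc m) L) (at L)"
proof -
  have dg: "((\<lambda>L. L + c) has_real_derivative 1) (at L)" by (auto intro!: derivative_eq_intros)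
  have di: "((\<lambda>L. II b k (L + c)) has_real_derivative - II b (Suc k) (L + c)) (at L)" for k
    using DERIV_chain2[OF II_deriv[OF b Lc, of k] dg] by simp
  have dL: "((\<lambda>L. L) has_real_derivative 1) (at L)" by (auto intro!: derivative_eq_intros)
  have "(DD b c m has_real_derivative
      (-1)^m * ((1 * II b m (L + c) + (- II b (Suc m) (L + c)) * L)
                - real m * (- II b (Suc (m - 1)) (L + c)))) (at L)"
    unfolding DD_def
    by (intro DERIV_cmult DERIV_diff DERIV_mult dL di)
  moreover have "(-1)^m * ((1 * II b m (L + c) + (- II b (Suc m) (L + c)) * L)
                - real m * (- II b (Suc (m - 1)) (L + c))) = DD b c (Suc m) L"
    unfolding DD_def by (cases m) (auto simp: algebra_simps)
  ultimately show ?thesis by simp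
qed

lemma DD0: "DD b c 0 L = L * II b 0 (L + c)" unfolding DD_def by simp
lemma DD1: "DD b c 1 L = II b 0 (L + c) - L * II b 1 (L + c)" unfolding DD_def by simp

lemma no_two_max:
  assumes b: "0 < b" and c: "0 < c" and p: "0 < p" and pq: "p < q"
    and pmax: "\<forall>L>0. DD b c 0 L \<le> DD b c 0 p" and qge: "DD b c 0 p \<le> DD b c 0 q"
  shows False
proof -
  have "DD b c 1 p = 0"
  proof (rule DERIV_local_max[OF _ p])
    show "DERIV (DD b c 0) p :> DD b c 1 p" using DD_deriv[OF b, of p c 0] p c by simp
    show "\<forall>y. \<bar>p - y\<bar> < p \<longrightarrow> DD b c 0 y \<le> DD b c 0 p" using pmax by auto
  qed
  then have neg: "DD b c 1 z < 0" if "z > p" for z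
    using Dp_mono[OF b c p that] DD1[of b c p] DD1[of b c z] by simp
  obtain z where z: "p < z" "z < q" "DD b c 0 q - DD b c 0 p = (q - p) * DD b c 1 z"
    using MVT2[OF pq, of "DD b c 0" "DD b c 1"] DD_deriv[OF b] p c by fastforce
  have "(q - p) * DD b c 1 z < 0" using neg[OF z(1)] pq by (simp add: mult_pos_neg)
  then show False using z(3) qge by linarith
qed



theorem lemma2:
  fixes \<alpha> Lj :: real and i j :: nat
  assumes "\<alpha> > 2" and "i \<in> {1, 2}" and "j \<in> {1, 2}" and "j \<noteq> i" and "Lj > 0"
  defines "f \<equiv> (\<lambda>L. if i = 1 then U \<alpha> i L Lj else U \<alpha> i Lj L)"
  shows "smooth_on_real {0<..} f \<and> continuous_on {0<..} f \<and>
         (\<exists>!Lstar. Lstar > 0 \<and> (\<forall>L>0. f L \<le> f Lstar))"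
proof -
  define b where "b = 2 / \<alpha>"
  have b0: "0 < b" and b1: "b < 1" using assms(1) by (auto simp: b_def field_simps)
  define c where "c = Lj"
  have c0: "0 < c" using assms(5) by (simp add: c_def)
  have fD: "f = DD b c 0"
  proof
    fix L
    show "f L = DD b c 0 L"
    proof (cases "i = 1")
      case True then show ?thesis unfolding f_def U_def DD0 II_def kk_def b_def c_def by simp
    next
      case False then show ?thesis unfolding f_def U_def DD0 II_def kk_def b_def c_def
        by (simp add: add.commute)
    qed
  qed
  have der: "(DD b c m has_real_derivative DD b c (Suc m) L) (at L)" if "L > 0" for m L
    using DD_deriv[OF b0, of L c m] that c0 by simp
  have smooth: "smooth_on_real {0<..} f"
    unfolding smooth_on_real_def fD by (intro exI[of _ "DD b c"]) (auto intro: der)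
  have cont: "continuous_on {0<..} f"
    unfolding fD by (intro continuous_at_imp_continuous_on) (auto intro: DERIV_isCont der)
  define g where "g = DD b c 0"
  have I0pos: "II b 0 s > 0" if "s > 0" for s
    using II0_ge_JJ[OF b0 that] JJ_pos[OF b0 that] by linarith
  have gpos: "g L > 0" if "L > 0" for L
    unfolding g_def DD0 using that c0 I0pos[of "L + c"] by simp
  have g1: "g 1 > 0" using gpos by simp
  have small: "g L \<le> L * II b 0 c" if "L > 0" for L
    unfolding g_def DD0 using that II_mono[OF b0 c0, of "L + c" 0] by (intro mult_left_mono) auto
  define r where "r = (b + 1) / 2"
  have r0: "0 < r" "r < 1" "b < r" using b0 b1 by (auto simp: r_def)
  define bnd where "bnd = (\<lambda>L. L powr (1 - r / b) + L * exp (- (L - 1) * L powr (- r)) * II b 0 1)"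
  have lim: "(bnd \<longlongrightarrow> 0) at_top"
  proof -
    have e1: "1 - r / b < 0" using r0 b0 by (simp add: field_simps)
    have t1: "((\<lambda>L. L powr (1 - r / b)) \<longlongrightarrow> 0) at_top"
      by (rule tendsto_neg_powr[OF e1 filterlim_ident])
    have t2: "((\<lambda>L. L * exp (- (L - 1) * L powr (- r))) \<longlongrightarrow> 0) at_top"
      using r0 by real_asymp
    have t3: "((\<lambda>L. L * exp (- (L - 1) * L powr (- r)) * II b 0 1) \<longlongrightarrow> 0) at_top"
      using tendsto_mult[OF t2 tendsto_const[of "II b 0 1"]] by simp
    show ?thesis unfolding bnd_def using tendsto_add_zero[OF t1 t3] by simp
  qed
  have "\<forall>\<^sub>F L in at_top. bnd L < g 1" using order_tendstoD(2)[OF lim g1] .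
  then obtain B where B: "\<And>L. L \<ge> B \<Longrightarrow> bnd L < g 1" unfolding eventually_at_top_linorder by blast
  define B' where "B' = max B 1"
  have big: "g L < g 1" if L: "L \<ge> B'" for L
  proof -
    have L1: "1 \<le> L" and LB: "B \<le> L" using L by (auto simp: B'_def)
    have "g L = L * II b 0 (L + c)" unfolding g_def DD0 ..
    also have "\<dots> \<le> L * II b 0 L" using II_mono[OF b0, of L "L + c" 0] L1 c0
      by (intro mult_left_mono) auto
    also have "\<dots> \<le> bnd L" unfolding bnd_def r_def using II0_bound[OF b0 b1 L1] by simp
    also have "\<dots> < g 1" using B[OF LB] .
    finally show ?thesis .
  qed
  define a where "a = min 1 (g 1 / (2 * II b 0 c))"
  have a0: "0 < a" and a1: "a \<le> 1" using g1 I0pos[OF c0] by (auto simp: a_def)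
  have smallL: "g L < g 1" if L: "0 < L" "L < a" for L
  proof -
    have "g L \<le> L * II b 0 c" using small L by simp
    also have "\<dots> < a * II b 0 c" using L I0pos[OF c0] by simp
    also have "\<dots> \<le> g 1 / (2 * II b 0 c) * II b 0 c"
      using I0pos[OF c0] by (intro mult_right_mono) (auto simp: a_def)
    also have "\<dots> = g 1 / 2" using I0pos[OF c0] by simp
    also have "\<dots> < g 1" using g1 by simp
    finally show ?thesis .
  qed
  have contg: "continuous_on {a..B'} g"
    using cont unfolding fD g_def by (rule continuous_on_subset) (use a0 in auto)
  obtain x where x: "x \<in> {a..B'}" "\<forall>y\<in>{a..B'}. g y \<le> g x"
  proof -
    have "a \<le> B'" using a1 by (simp add: B'_def)
    then have "{a..B'} \<noteq> {}" by simp
    then show ?thesis using continuous_attains_sup[OF compact_Icc _ contg] that by blast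
  qed
  have x0: "0 < x" using x(1) a0 by simp
  have xmax: "\<forall>L>0. g L \<le> g x"
  proof (intro allI impI)
    fix L :: real assume L: "0 < L"
    have g1x: "g 1 \<le> g x" using x(2) a1 by (auto simp: B'_def)
    consider "L < a" | "L > B'" | "L \<in> {a..B'}" by fastforce
    then show "g L \<le> g x"
    proof cases
      case 1 then show ?thesis using smallL L g1x by fastforce
    next
      case 2 then have "g L < g 1" using big[of L] by simp
      then show ?thesis using g1x by simp
    next
      case 3 then show ?thesis using x(2) by blast
    qed
  qed
  have ex1: "\<exists>!Lstar. Lstar > 0 \<and> (\<forall>L>0. g L \<le> g Lstar)"
  proof (rule ex1I[of _ x])
    show "x > 0 \<and> (\<forall>L>0. g L \<le> g x)" using x0 xmax by blast
    fix y assume y: "y > 0 \<and> (\<forall>L>0. g L \<le> g y)"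
    show "y = x"
    proof (rule ccontr)
      assume "y \<noteq> x"
      then consider "y < x" | "x < y" by linarith
      then show False
      proof cases
        case 1 then show False
          using no_two_max[OF b0 c0, of y x] y xmax x0 unfolding g_def by auto
      next
        case 2 then show False
          using no_two_max[OF b0 c0, of x y] y xmax x0 unfolding g_def by auto
      qed
    qed
  qed
  show ?thesis using smooth cont ex1 unfolding fD g_def by blast
qed


end
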